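(* For every $\epsilon\in(0,1)$ there is $\bar R(\epsilon)>0$ such that the following holds. Let $p,q\in\mathbb{H}^n\setminus\{0\}$, $t,\tilde t\ge1$, $R>\bar R(\epsilon)$ with $R>1$, and $r\ge\tilde r\ge t\tilde tR$ with $\tilde r\ge\epsilon r$. If $0\in\partial_tB_r(p)\cap\partial_{\tilde t}B_{\tilde r}(q)$ and $q\in\partial_tB_r(p)$, then $d(\hat p,\hat q)\ge\frac12\big(1-\sqrt{1-\epsilon^2/4}\big)$.
   Context: $\mathbb{H}^n=\mathbb{C}^n\times\mathbb{R}$ with product $(z,\tau)(w,\sigma)=(z+w,\tau+\sigma+\tfrac12\operatorname{Im}\langle z,w\rangle)$, $\langle z,w\rangle=\sum_j\overline{z_j}w_j$, identity $0$. Dilations $\delta_\lambda(z,\tau)=(\lambda z,\lambda^2\tau)$. $d(p,q)=\inf\{r>0:\delta_{1/r}(pq^{-1})\in B_{eucl}\}$ ($B_{eucl}$ the closed Euclidean unit ball in $\mathbb{R}^{2n+1}$); explicitly $d((z,\tau),(w,\sigma))=\frac1{\sqrt2}\big(\|z-w\|^2+\sqrt{\|z-w\|^4+4(\tau-\sigma-\frac12\operatorname{Im}\langle z,w\rangle)^2}\big)^{1/2}$. $B_r(p)=\{y:d(y,p)\le r\}$, $\partial B_r(p)=\{y:d(y,p)=r\}$, $\partial_tB_r(p)=\{y\in\mathbb{H}^n:d(y,\partial B_r(p))\le t\}$. For $p\ne0$, $\hat p=\delta_{1/d(p,0)}p$ is its projection to the unit sphere. *)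

theory Defs
  imports "HOL-Analysis.Analysis"
begin

text \<open>Heisenberg group H^n = C^n x R, with C^n modelled as complex^'n ('n a finite index type, n = CARD('n)).\<close>

type_synonym 'n heis = "(complex^'n) \<times> real"

definition herm :: "complex^'n \<Rightarrow> complex^'n \<Rightarrow> complex" where
  "herm z w = (\<Sum>j\<in>UNIV. cnj (z $ j) * w $ j)"

definition hmult :: "'n::finite heis \<Rightarrow> 'n heis \<Rightarrow> 'n heis" where
  "hmult p q = (fst p + fst q, snd p + snd q + (1/2) * Im (herm (fst p) (fst q)))"

definition hinv :: "'n::finite heis \<Rightarrow> 'n heis" where
  "hinv p = (- fst p, - snd p)"

definition hdil :: "real \<Rightarrow> 'n::finite heis \<Rightarrow> 'n heis" where
  "hdil lam p = (complex_of_real lam *s fst p, lam^2 * snd p)"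

definition in_eucl_ball :: "'n::finite heis \<Rightarrow> bool" where
  "in_eucl_ball p \<longleftrightarrow> norm (fst p)^2 + (snd p)^2 \<le> 1"

definition hdist :: "'n::finite heis \<Rightarrow> 'n heis \<Rightarrow> real" where
  "hdist p q = Inf {r. r > 0 \<and> in_eucl_ball (hdil (1/r) (hmult p (hinv q)))}"

definition hsphere :: "'n::finite heis \<Rightarrow> real \<Rightarrow> 'n heis set" where
  "hsphere p r = {y. hdist y p = r}"

definition hsetdist :: "'n::finite heis \<Rightarrow> 'n heis set \<Rightarrow> real" where
  "hsetdist y S = Inf (hdist y ` S)"

text \<open>t-neighbourhood of the sphere \<partial>B_r(p).\<close>
definition hshell :: "'n::finite heis \<Rightarrow> real \<Rightarrow> real \<Rightarrow> 'n heis set" where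
  "hshell p r t = {y. hsetdist y (hsphere p r) \<le> t}"

definition hproj :: "'n::finite heis \<Rightarrow> 'n heis" where
  "hproj p = hdil (1 / hdist p 0) p"

end

theory Submission
  imports Defs "HOL-Analysis.Analysis"
begin


lemma herm_add_left: "herm (a+b) c = herm a c + herm b c"
  unfolding herm_def by (simp add: sum.distrib distrib_right)
lemma herm_add_right: "herm c (a+b) = herm c a + herm c b"
  unfolding herm_def by (simp add: sum.distrib distrib_left)
lemma herm_neg_left: "herm (-a) c = - herm a c"
  unfolding herm_def by (simp add: sum_negf)
lemma herm_neg_right: "herm c (-a) = - herm c a"
  unfolding herm_def by (simp add: sum_negf)
lemma cscaleR: "(k::real) *\<^sub>R (z::complex) = of_real k * z" by (simp add: scaleR_conv_of_real)
lemma herm_scale_left: "herm (k *\<^sub>R a) c = of_real k * herm a c"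
  unfolding herm_def by (simp add: sum_distrib_left cscaleR mult.assoc)
lemma herm_scale_right: "herm c (k *\<^sub>R a) = of_real k * herm c a"
  unfolding herm_def by (simp add: sum_distrib_left cscaleR mult.left_commute)
lemma herm_swap: "herm w z = cnj (herm z w)"
  unfolding herm_def by (simp add: mult.commute)
lemma Im_herm_self: "Im (herm z z) = 0"
  unfolding herm_def by (simp add: algebra_simps)
lemma herm_zero_left[simp]: "herm 0 z = 0" unfolding herm_def by simp
lemma herm_zero_right[simp]: "herm z 0 = 0" unfolding herm_def by simp

lemma abs_Im_herm: "\<bar>Im (herm z w)\<bar> \<le> norm z * norm w"
proof -
  have "\<bar>Im (herm z w)\<bar> \<le> cmod (herm z w)" by (rule abs_Im_le_cmod)
  also have "\<dots> \<le> (\<Sum>j\<in>UNIV. cmod (cnj (z $ j) * w $ j))" unfolding herm_def by (rule norm_sum)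
  also have "\<dots> = (\<Sum>j\<in>UNIV. \<bar>cmod (z $ j)\<bar> * \<bar>cmod (w $ j)\<bar>)" by (simp add: norm_mult)
  also have "\<dots> \<le> L2_set (\<lambda>j. cmod (z $ j)) UNIV * L2_set (\<lambda>j. cmod (w $ j)) UNIV" by (rule L2_set_mult_ineq)
  also have "\<dots> = norm z * norm w" by (simp add: norm_vec_def)
  finally show ?thesis .
qed

lemma hdil_alt: "hdil c p = (c *\<^sub>R fst p, c^2 * snd p)"
  unfolding hdil_def by (simp add: vec_eq_iff cscaleR)

definition gN :: "'n::finite heis \<Rightarrow> real" where
  "gN x = sqrt ((norm (fst x)^2 + sqrt ((norm (fst x)^2)^2 + 4 * (snd x)^2)) / 2)"

lemma gN_crit: assumes "L > 0"
  shows "gN x \<le> L \<longleftrightarrow> norm (fst x)^2 * L^2 + (snd x)^2 \<le> L^4"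
proof -
  define u where "u = norm (fst x)^2"
  define w where "w = snd x"
  have u0: "u \<ge> 0" unfolding u_def by simp
  have "gN x \<le> L \<longleftrightarrow> (u + sqrt (u^2 + 4*w^2))/2 \<le> L^2"
    unfolding gN_def u_def w_def using assms
    by (meson less_imp_le real_le_lsqrt sqrt_le_D)
  also have "\<dots> \<longleftrightarrow> sqrt (u^2 + 4*w^2) \<le> 2*L^2 - u" by auto
  also have "\<dots> \<longleftrightarrow> u * L^2 + w^2 \<le> L^4"
  proof
    assume h: "sqrt (u^2 + 4*w^2) \<le> 2*L^2 - u"
    hence "u^2 + 4*w^2 \<le> (2*L^2 - u)^2" by (rule sqrt_le_D)
    thus "u * L^2 + w^2 \<le> L^4" by (simp add: power2_eq_square power4_eq_xxxx algebra_simps)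
  next
    assume h: "u * L^2 + w^2 \<le> L^4"
    have "u \<le> L^2"
    proof (rule ccontr)
      assume "\<not> u \<le> L^2"
      hence "L^2 * L^2 < u * L^2" using assms by (intro mult_strict_right_mono) auto
      moreover have "L^4 = L^2 * L^2" by (simp add: power4_eq_xxxx power2_eq_square)
      ultimately show False using h by (smt (verit) zero_le_power2)
    qed
    hence nn: "2*L^2 - u \<ge> 0" using u0 by simp
    have "u^2 + 4*w^2 \<le> (2*L^2 - u)^2" using h by (simp add: power2_eq_square power4_eq_xxxx algebra_simps)
    thus "sqrt (u^2 + 4*w^2) \<le> 2*L^2 - u" using nn by (simp add: real_le_lsqrt)
  qed
  finally show ?thesis unfolding u_def w_def .
qed



lemma tri_core:
  fixes a b Z W T S L :: real
  assumes a: "a > 0" and b: "b > 0" and "Z \<ge> 0" "W \<ge> 0" "T \<ge> 0" "S \<ge> 0"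
    and ha: "Z^2*a^2 + T^2 \<le> a^4" and hb: "W^2*b^2 + S^2 \<le> b^4" and L: "L = a + 2*b"
  shows "(Z+W)^2*L^2 + (T+S+Z*W/2)^2 \<le> L^4"
proof -
  have La: "L \<ge> a" "L \<ge> b" "L > 0" using a b L by auto
  have Za: "Z \<le> a"
  proof -
    have e: "a^4 = a^2*a^2" by (simp add: power4_eq_xxxx power2_eq_square)
    have "Z^2*a^2 \<le> a^2*a^2" using ha zero_le_power2[of T] unfolding e by linarith
    hence "Z^2 \<le> a^2" by (rule mult_right_le_imp_le) (use a in simp)
    thus ?thesis using a \<open>Z\<ge>0\<close> power2_le_imp_le[of Z a] by linarith
  qed
  have Wb: "W \<le> b"
  proof -
    have e: "b^4 = b^2*b^2" by (simp add: power4_eq_xxxx power2_eq_square)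
    have "W^2*b^2 \<le> b^2*b^2" using hb zero_le_power2[of S] unfolding e by linarith
    hence "W^2 \<le> b^2" by (rule mult_right_le_imp_le) (use b in simp)
    thus ?thesis using b \<open>W\<ge>0\<close> power2_le_imp_le[of W b] by linarith
  qed
  have n1: "cmod (Complex (Z*L) T) \<le> a*L"
  proof -
    have q: "1 \<le> L^2/a^2" using a La power_mono[of a L 2] by simp
    have "T^2 \<le> (L^2/a^2) * T^2" using mult_right_mono[OF q, of "T^2"] by simp
    moreover have "(L^2/a^2) * (Z^2*a^2 + T^2) = (Z*L)^2 + (L^2/a^2) * T^2" using a by (simp add: field_simps power_mult_distrib)
    ultimately have "(Z*L)^2 + T^2 \<le> (L^2/a^2) * (Z^2*a^2 + T^2)" by linarith
    also have "\<dots> \<le> (L^2/a^2) * a^4" using ha by (intro mult_left_mono) auto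
    also have "\<dots> = (a*L)^2" using a by (simp add: field_simps power4_eq_xxxx power2_eq_square)
    finally show ?thesis unfolding cmod_def using a La by (simp add: real_le_lsqrt)
  qed
  have n2: "cmod (Complex (W*L) S) \<le> b*L"
  proof -
    have q: "1 \<le> L^2/b^2" using b La power_mono[of b L 2] by simp
    have "S^2 \<le> (L^2/b^2) * S^2" using mult_right_mono[OF q, of "S^2"] by simp
    moreover have "(L^2/b^2) * (W^2*b^2 + S^2) = (W*L)^2 + (L^2/b^2) * S^2" using b by (simp add: field_simps power_mult_distrib)
    ultimately have "(W*L)^2 + S^2 \<le> (L^2/b^2) * (W^2*b^2 + S^2)" by linarith
    also have "\<dots> \<le> (L^2/b^2) * b^4" using hb by (intro mult_left_mono) auto
    also have "\<dots> = (b*L)^2" using b by (simp add: field_simps power4_eq_xxxx power2_eq_square)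
    finally show ?thesis unfolding cmod_def using b La by (simp add: real_le_lsqrt)
  qed
  have n3: "cmod (Complex 0 (Z*W/2)) \<le> b*L/2"
  proof -
    have "Z*W \<le> a*b" using Za Wb \<open>Z\<ge>0\<close> \<open>W\<ge>0\<close> by (simp add: mult_mono)
    also have "\<dots> \<le> L*b" using La b by (simp add: mult_right_mono)
    finally show ?thesis using \<open>Z\<ge>0\<close> \<open>W\<ge>0\<close> by (simp add: cmod_def mult.commute)
  qed
  have "Complex ((Z+W)*L) (T+S+Z*W/2) = Complex (Z*L) T + Complex (W*L) S + Complex 0 (Z*W/2)"
    by (simp add: complex_eq_iff algebra_simps)
  hence "cmod (Complex ((Z+W)*L) (T+S+Z*W/2)) \<le> cmod (Complex (Z*L) T) + cmod (Complex (W*L) S) + cmod (Complex 0 (Z*W/2))"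
    by (metis norm_triangle_ineq order_trans add_right_mono)
  also have "\<dots> \<le> a*L + b*L + b*L/2" using n1 n2 n3 by linarith
  also have "\<dots> \<le> L^2" using L La a b by (simp add: power2_eq_square algebra_simps)
  finally have "sqrt (((Z+W)*L)^2 + (T+S+Z*W/2)^2) \<le> L^2" unfolding cmod_def by simp
  hence "((Z+W)*L)^2 + (T+S+Z*W/2)^2 \<le> (L^2)^2" by (rule sqrt_le_D)
  moreover have e1: "((Z+W)*L)^2 = (Z+W)^2*L^2" by (rule power_mult_distrib)
  moreover have e2: "(L^2)^2 = L^4" by (simp flip: power_mult)
  ultimately show ?thesis by simp
qed



lemma gN_nonneg: "gN x \<ge> 0" unfolding gN_def by simp

lemma gN_sq: "(gN x)^2 = (norm (fst x)^2 + sqrt ((norm (fst x)^2)^2 + 4 * (snd x)^2)) / 2"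
  unfolding gN_def by (simp add: add_nonneg_nonneg)

lemma gN_lb: "norm (fst x)^2 \<le> (gN x)^2" "\<bar>snd x\<bar> \<le> (gN x)^2"
proof -
  have s1: "norm (fst x)^2 \<le> sqrt ((norm (fst x)^2)^2 + 4 * (snd x)^2)"
    by (rule real_le_rsqrt) simp
  have wq2: "2*\<bar>snd x\<bar> \<le> sqrt ((norm (fst x)^2)^2 + 4 * (snd x)^2)"
    by (rule real_le_rsqrt) (simp add: power_mult_distrib)
  show "norm (fst x)^2 \<le> (gN x)^2" using s1 unfolding gN_sq by simp
  have aux: "\<And>a s r::real. 2*a \<le> s \<Longrightarrow> 0 \<le> r \<Longrightarrow> a \<le> (r + s)/2" by (simp add: field_simps)
  show "\<bar>snd x\<bar> \<le> (gN x)^2" unfolding gN_sq by (rule aux[OF wq2 zero_le_power2])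
qed

lemma gN_pos: assumes "x \<noteq> 0" shows "gN x > 0"
proof (rule ccontr)
  assume "\<not> gN x > 0"
  hence "gN x = 0" using gN_nonneg[of x] by simp
  hence "norm (fst x)^2 \<le> 0" "\<bar>snd x\<bar> \<le> 0" using gN_lb[of x] by auto
  hence "fst x = 0" "snd x = 0" by auto
  thus False using assms by (simp add: prod_eq_iff)
qed

lemma gN_zero[simp]: "gN (0::'n::finite heis) = 0" unfolding gN_def by simp

lemma gN_inv[simp]: "gN (hinv x) = gN x" unfolding gN_def hinv_def by simp

lemma gN_dil: assumes c: "c \<ge> 0" shows "gN (hdil c x) = c * gN x"
proof -
  define u where "u = norm (fst x)^2"
  define w where "w = snd x"
  have "norm (fst (hdil c x))^2 = c^2 * u" unfolding hdil_alt u_def using c by (simp add: power_mult_distrib)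
  moreover have "snd (hdil c x) = c^2 * w" unfolding hdil_alt w_def by simp
  moreover have "sqrt ((c^2*u)^2 + 4*(c^2*w)^2) = c^2 * sqrt (u^2 + 4*w^2)"
  proof -
    have e: "(c^2*u)^2 + 4*(c^2*w)^2 = (c^2)^2 * (u^2 + 4*w^2)" by (simp add: power_mult_distrib algebra_simps)
    have e2: "sqrt ((c^2)^2) = c^2" by (rule real_sqrt_unique) auto
    show ?thesis unfolding e real_sqrt_mult e2 ..
  qed
  ultimately have "gN (hdil c x) = sqrt ((c^2*u + c^2 * sqrt (u^2 + 4*w^2))/2)" unfolding gN_def by simp
  also have "\<dots> = sqrt (c^2 * ((u + sqrt (u^2 + 4*w^2))/2))"
    by (simp add: algebra_simps)
  also have "\<dots> = sqrt (c^2) * sqrt ((u + sqrt (u^2 + 4*w^2))/2)"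
    by (rule real_sqrt_mult)
  also have "\<dots> = c * gN x" unfolding gN_def u_def w_def using c by simp
  finally show ?thesis .
qed

lemma ball_iff: assumes r: "r > 0"
  shows "in_eucl_ball (hdil (1/r) x) \<longleftrightarrow> gN x \<le> r"
proof -
  have "in_eucl_ball (hdil (1/r) x) \<longleftrightarrow> norm (fst x)^2 / r^2 + (snd x)^2 / r^4 \<le> 1"
    unfolding in_eucl_ball_def hdil_alt by (simp add: power_divide power_mult_distrib flip: power_mult)
  also have "\<dots> \<longleftrightarrow> norm (fst x)^2 * r^2 + (snd x)^2 \<le> r^4"
  proof -
    have r4: "r^4 > 0" using r by simp
    have "norm (fst x)^2 / r^2 + (snd x)^2 / r^4 = (norm (fst x)^2 * r^2 + (snd x)^2) / r^4"
      using r by (simp add: field_simps power4_eq_xxxx power2_eq_square)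
    thus ?thesis using r4 by (simp add: divide_le_eq_1)
  qed
  also have "\<dots> \<longleftrightarrow> gN x \<le> r" by (rule gN_crit[OF r, symmetric])
  finally show ?thesis .
qed

lemma hdist_gN: "hdist p q = gN (hmult p (hinv q))"
proof -
  define x where "x = hmult p (hinv q)"
  have "{r. r > 0 \<and> in_eucl_ball (hdil (1/r) x)} = {r. r > 0 \<and> gN x \<le> r}"
    using ball_iff by blast
  also have "\<dots> = (if gN x > 0 then {gN x..} else {0<..})"
    using gN_nonneg[of x] by (auto simp: less_le_trans)
  finally have "hdist p q = Inf (if gN x > 0 then {gN x..} else {0<..})"
    unfolding hdist_def x_def by simp
  thus ?thesis using gN_nonneg[of x] unfolding x_def[symmetric] by (auto split: if_splits)
qed



lemma Im_herm_swap: "Im (herm w z) = - Im (herm z w)"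
  by (simp add: herm_swap[of w z])

lemma hinv_hmult: "hinv (hmult x y) = hmult (hinv y) (hinv x)"
  unfolding hinv_def hmult_def
  by (simp add: herm_neg_left herm_neg_right Im_herm_swap[of "fst y" "fst x"] algebra_simps)

lemma hmult_assoc: "hmult (hmult x y) v = hmult x (hmult y v)"
  unfolding hmult_def by (simp add: herm_add_left herm_add_right algebra_simps)

lemma hmult_hinv: "hmult x (hinv x) = 0"
  unfolding hmult_def hinv_def by (simp add: herm_neg_right Im_herm_self prod_eq_iff)

lemma hinv_hmult_self: "hmult (hinv x) x = 0"
  unfolding hmult_def hinv_def by (simp add: herm_neg_left Im_herm_self prod_eq_iff)

lemma hmult_zero_left[simp]: "hmult 0 x = x" unfolding hmult_def by simp
lemma hmult_zero_right[simp]: "hmult x 0 = x" unfolding hmult_def by simp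
lemma hinv_hinv[simp]: "hinv (hinv x) = x" unfolding hinv_def by simp
lemma hinv_zero[simp]: "hinv 0 = 0" unfolding hinv_def by (simp add: zero_prod_def)

lemma hdil_hmult: "hdil c (hmult x y) = hmult (hdil c x) (hdil c y)"
  unfolding hdil_alt hmult_def by (simp add: herm_scale_left herm_scale_right algebra_simps power2_eq_square)

lemma hdil_hinv: "hdil c (hinv x) = hinv (hdil c x)"
  unfolding hdil_alt hinv_def by simp

lemma hdil_hdil: "hdil c (hdil d x) = hdil (c*d) x"
  unfolding hdil_alt by (simp add: power_mult_distrib)

lemma hdil_one[simp]: "hdil 1 x = x"
  unfolding hdil_alt by simp

lemma gN_tri: "gN (hmult x y) \<le> gN x + 2 * gN y"
proof (cases "x = 0 \<or> y = 0")
  case True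
  thus ?thesis using gN_nonneg[of x] gN_nonneg[of y] by auto
next
  case False
  define a where "a = gN x"
  define b where "b = gN y"
  have a: "a > 0" and b: "b > 0" using False gN_pos[of x] gN_pos[of y] a_def b_def by auto
  define L where "L = a + 2*b"
  have L: "L > 0" using a b L_def by simp
  obtain z tau where x: "x = (z, tau)" by fastforce
  obtain w sig where y: "y = (w, sig)" by fastforce
  have ha: "norm z^2 * a^2 + tau^2 \<le> a^4" using gN_crit[OF a, of x] x a_def by simp
  have hb: "norm w^2 * b^2 + sig^2 \<le> b^4" using gN_crit[OF b, of y] y b_def by simp
  have core: "(norm z + norm w)^2*L^2 + (\<bar>tau\<bar>+\<bar>sig\<bar>+norm z*norm w/2)^2 \<le> L^4"
    by (rule tri_core[OF a b _ _ _ _ _ _ L_def]) (use ha hb in auto)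
  have e1: "norm (z + w)^2 \<le> (norm z + norm w)^2"
    by (rule power_mono[OF norm_triangle_ineq]) simp
  have "\<bar>tau + sig + 1/2 * Im (herm z w)\<bar> \<le> \<bar>tau\<bar>+\<bar>sig\<bar>+norm z*norm w/2"
    using abs_Im_herm[of z w] by (simp add: abs_triangle_ineq4)
  hence e2: "(tau + sig + 1/2 * Im (herm z w))^2 \<le> (\<bar>tau\<bar>+\<bar>sig\<bar>+norm z*norm w/2)^2"
    by (metis abs_ge_zero power2_abs power_mono)
  have "norm (z + w)^2 * L^2 + (tau + sig + 1/2 * Im (herm z w))^2 \<le> L^4"
    using core mult_right_mono[OF e1, of "L^2"] e2 by simp
  hence "gN (hmult x y) \<le> L" using gN_crit[OF L, of "hmult x y"] x y unfolding hmult_def by simp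
  thus ?thesis unfolding L_def a_def b_def .
qed

lemma gN_tri2: "gN (hmult x y) \<le> 2 * gN x + gN y"
proof -
  have "gN (hmult x y) = gN (hinv (hmult x y))" by simp
  also have "\<dots> = gN (hmult (hinv y) (hinv x))" by (simp add: hinv_hmult)
  also have "\<dots> \<le> gN (hinv y) + 2 * gN (hinv x)" by (rule gN_tri)
  finally show ?thesis by simp
qed



lemma final_arith:
  fixes e R r r' t t' a b \<eta> :: real
  assumes e0: "0 < e" and e1: "e < 1" and R: "R > 100/e^2"
    and tR: "t*R \<le> r" and tR': "t'*R \<le> r'" and rr: "r' \<le> r" and er: "e*r \<le> r'"
    and r'pos: "r' > 0" and t0: "t \<ge> 0" and t'0: "t' \<ge> 0"
    and ha: "\<bar>a - r\<bar> \<le> 4*t" and hb: "\<bar>b - r'\<bar> \<le> 4*t'" and a0: "a \<ge> 0" and b0: "b \<ge> 0"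
    and eta0: "\<eta> \<ge> 0"
    and main: "r - 4*t \<le> 2*b*\<eta> + sqrt \<bar>a^2 - b^2\<bar>"
  shows "\<eta> \<ge> (1/2) * (1 - sqrt (1 - e^2/4))"
proof -
  define wq2 where "wq2 = sqrt (1 - e^2/4)"
  have e2: "e^2 < 1" "e^2 > 0" using e0 e1 by (auto simp: power_less_one_iff)
  have R100: "R > 100"
  proof -
    have "100/e^2 > 100" using e2 by (simp add: field_simps)
    thus ?thesis using R by linarith
  qed
  have Rpos: "R > 0" using R100 by simp
  define d where "d = 4/R"
  have d0: "d > 0" unfolding d_def using Rpos by simp
  have dsmall: "d < e^2/25"
  proof -
    have "R * e^2 > 100" using R e2 by (simp add: field_simps)
    thus ?thesis unfolding d_def using Rpos e2 by (simp add: field_simps)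
  qed
  have d1: "d \<le> 1" using dsmall e2 by simp
  have rpos: "r > 0" using r'pos rr by simp
  have h1: "4*t \<le> d*r"
  proof -
    have "4*t = d*(t*R)" unfolding d_def using Rpos by simp
    also have "\<dots> \<le> d*r" using tR d0 by (simp add: mult_left_mono)
    finally show ?thesis .
  qed
  have h2: "4*t' \<le> d*r'"
  proof -
    have "4*t' = d*(t'*R)" unfolding d_def using Rpos by simp
    also have "\<dots> \<le> d*r'" using tR' d0 by (simp add: mult_left_mono)
    finally show ?thesis .
  qed
  have h2': "d*r' \<le> d*r" using rr d0 by (simp add: mult_left_mono)
  have aU: "a \<le> r*(1+d)" and aL: "r*(1-d) \<le> a" using ha h1 by (auto simp: algebra_simps abs_le_iff)
  have bU: "b \<le> r*(1+d)" using hb h2 h2' rr by (auto simp: algebra_simps abs_le_iff)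
  have bL': "r'*(1-d) \<le> b" using hb h2 by (auto simp: algebra_simps abs_le_iff)
  have "e*r*(1-d) \<le> r'*(1-d)" using er d1 by (simp add: mult_right_mono)
  hence bL: "e*r*(1-d) \<le> b" using bL' by linarith
  define K where "K = (1+d)^2 - e^2*(1-d)^2 + 4*d"
  have K1: "(1+d)^2 - e^2*(1-d)^2 \<ge> 0"
  proof -
    have "e^2*(1-d)^2 \<le> 1*(1-d)^2" using e2 by (intro mult_right_mono) auto
    also have "\<dots> \<le> (1+d)^2" using power_mono[of "1-d" "1+d" 2] d0 d1 by simp
    finally show ?thesis by simp
  qed
  have absK: "\<bar>a^2 - b^2\<bar> \<le> r^2 * K"
  proof (cases "a \<ge> b")
    case True
    have "a^2 \<le> (r*(1+d))^2" using aU a0 by (intro power_mono) auto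
    moreover have "(e*r*(1-d))^2 \<le> b^2" using bL e0 rpos d1 by (intro power_mono) auto
    moreover have "b^2 \<le> a^2" using True b0 by (intro power_mono) auto
    ultimately have "\<bar>a^2 - b^2\<bar> \<le> (r*(1+d))^2 - (e*r*(1-d))^2" by simp
    also have "\<dots> = r^2*((1+d)^2 - e^2*(1-d)^2)" by (simp add: power2_eq_square algebra_simps)
    also have "\<dots> \<le> r^2 * K" unfolding K_def using d0 by (simp add: algebra_simps)
    finally show ?thesis .
  next
    case False
    have "b^2 \<le> (r*(1+d))^2" using bU b0 by (intro power_mono) auto
    moreover have "(r*(1-d))^2 \<le> a^2" using aL rpos d1 by (intro power_mono) auto
    moreover have "a^2 \<le> b^2" using False a0 by (intro power_mono) auto
    ultimately have "\<bar>a^2 - b^2\<bar> \<le> (r*(1+d))^2 - (r*(1-d))^2" by simp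
    also have "\<dots> = r^2*(4*d)" by (simp add: power2_eq_square algebra_simps)
    also have "\<dots> \<le> r^2 * K" unfolding K_def using K1 by (intro mult_left_mono) auto
    finally show ?thesis .
  qed
  have s2le1: "wq2 \<le> 1" unfolding wq2_def using e2 by simp
  have s2sq: "wq2^2 = 1 - e^2/4" unfolding wq2_def using e2 by simp
  have s2big: "wq2 \<ge> 3/4"
  proof -
    have "wq2 \<ge> 0" unfolding wq2_def using e2 by simp
    hence "wq2^2 \<le> wq2" using mult_left_le_one_le[of wq2 wq2] s2le1 by (simp add: power2_eq_square)
    thus ?thesis using s2sq e2 by linarith
  qed
  have Kle: "K \<le> 1 - e^2 + 9*d"
  proof -
    have "d^2 \<le> d" using d0 d1 by (simp add: power2_eq_square mult_left_le_one_le)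
    moreover have "e^2*d \<le> d" using e2 d0 by (simp add: mult_left_le_one_le)
    moreover have "e^2*d^2 \<ge> 0" by simp
    moreover have "K = 1 + 2*d + d^2 - e^2 + 2*(e^2*d) - e^2*d^2 + 4*d"
      unfolding K_def by (simp add: power2_eq_square algebra_simps)
    ultimately show ?thesis by linarith
  qed
  have sq: "(wq2 - 2*d)^2 \<ge> 1 - e^2/4 - 4*d"
  proof -
    have "(wq2 - 2*d)^2 = wq2^2 - 4*d*wq2 + 4*d^2" by (simp add: power2_eq_square algebra_simps)
    moreover have "4*d*wq2 \<le> 4*d" using s2le1 d0 by simp
    moreover have "d^2 \<ge> 0" by simp
    ultimately show ?thesis using s2sq by linarith
  qed
  have "25*d < e^2" using dsmall by (simp add: field_simps)
  hence "13*d \<le> 3*e^2/4" using d0 by linarith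
  hence Ks: "K \<le> (wq2 - 2*d)^2" using Kle sq by linarith
  have nn: "wq2 - 2*d \<ge> 0" using s2big dsmall e2 by simp
  have "\<bar>a^2 - b^2\<bar> \<le> (r*(wq2 - 2*d))^2"
  proof -
    have "r^2 * K \<le> r^2 * (wq2 - 2*d)^2" using Ks by (intro mult_left_mono) auto
    thus ?thesis using absK by (simp add: power_mult_distrib)
  qed
  hence sqb: "sqrt \<bar>a^2 - b^2\<bar> \<le> r*(wq2 - 2*d)" using nn rpos by (intro real_le_lsqrt) auto
  have "2*b*\<eta> \<le> 2*(r*(1+d))*\<eta>" using bU eta0 by (intro mult_right_mono) auto
  hence "r*(1-d) \<le> 2*(r*(1+d))*\<eta> + r*(wq2 - 2*d)" using main sqb h1 by (simp add: algebra_simps)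
  hence "r*(1 + d - wq2) \<le> r*(2*(1+d)*\<eta>)" by (simp add: algebra_simps)
  hence key: "1 + d - wq2 \<le> 2*(1+d)*\<eta>" using rpos by simp
  show ?thesis
  proof (rule ccontr)
    assume "\<not> ?thesis"
    hence "2*\<eta> < 1 - wq2" unfolding wq2_def by simp
    hence "(1+d)*(2*\<eta>) < (1+d)*(1 - wq2)" using d0 by (intro mult_strict_left_mono) auto
    moreover have "(1+d)*(1-wq2) \<le> 1 - wq2 + d" using d0 s2big by (simp add: algebra_simps)
    ultimately show False using key by (simp add: algebra_simps)
  qed
qed



lemma gN_vert: assumes "r \<ge> 0" shows "gN ((0, r^2) :: 'n::finite heis) = r"
proof -
  have e: "sqrt (4 * r^4) = 2 * r^2" by (rule real_sqrt_unique) (simp_all add: power_mult_distrib flip: power_mult)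
  show ?thesis unfolding gN_def using assms by (simp add: e)
qed

lemma shell_point:
  fixes x p :: "'n::finite heis"
  assumes "x \<in> hshell p r t" "r > 0"
  obtains y where "hdist y p = r" "hdist x y < t + 1"
proof -
  define y0 where "y0 = hmult ((0, r^2) :: 'n heis) p"
  have "hdist y0 p = r" unfolding hdist_gN y0_def hmult_assoc hmult_hinv
    using gN_vert[of r] assms(2) by simp
  hence "y0 \<in> hsphere p r" unfolding hsphere_def by simp
  hence ne: "hdist x ` hsphere p r \<noteq> {}" by blast
  have "Inf (hdist x ` hsphere p r) < t + 1" using assms(1) unfolding hshell_def hsetdist_def by simp
  from cInf_lessD[OF ne this] obtain y where "y \<in> hsphere p r" "hdist x y < t + 1" by auto
  thus ?thesis using that unfolding hsphere_def by auto
qed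

lemma gauge_m:
  fixes P :: "'n::finite heis"
  assumes P: "gN P \<le> 1" and a: "a \<ge> 0" and b: "b \<ge> 0"
  shows "gN (hmult (hdil b P) (hinv (hdil a P))) \<le> sqrt \<bar>a^2 - b^2\<bar>"
proof -
  obtain z tau where Pz: "P = (z, tau)" by fastforce
  have hP: "norm z^2 + tau^2 \<le> 1" using gN_crit[of 1 P] P Pz by simp
  have m: "hmult (hdil b P) (hinv (hdil a P)) = ((b - a) *\<^sub>R z, (b^2 - a^2) * tau)"
    unfolding Pz hdil_alt hmult_def hinv_def
    by (simp add: herm_scale_left herm_scale_right herm_neg_right Im_herm_self algebra_simps)
  show ?thesis
  proof (cases "a = b")
    case True
    have "gN ((0,0)::'n heis) = 0" using gN_zero[where 'n='n] by (simp add: zero_prod_def)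
    thus ?thesis unfolding m using True by simp
  next
    case False
    define L where "L = sqrt \<bar>a^2 - b^2\<bar>"
    have ab: "\<bar>a^2 - b^2\<bar> > 0"
    proof -
      have "a^2 \<noteq> b^2" using False a b by (metis power2_eq_iff_nonneg)
      thus ?thesis by simp
    qed
    have L: "L > 0" unfolding L_def using ab by simp
    have L2: "L^2 = \<bar>a^2 - b^2\<bar>" unfolding L_def by simp
    have L4: "L^4 = (a^2 - b^2)^2" using L2 by (metis power2_abs power_mult numeral_times_numeral semiring_norm(11) semiring_norm(13) mult_2)
    have ba: "(b - a)^2 \<le> \<bar>a^2 - b^2\<bar>"
    proof -
      have "(b-a)^2 = \<bar>b - a\<bar> * \<bar>b - a\<bar>" by (simp add: power2_eq_square abs_mult_self_eq)
      also have "\<dots> \<le> \<bar>b - a\<bar> * (a + b)" using a b by (intro mult_left_mono) auto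
      also have "\<dots> = \<bar>a^2 - b^2\<bar>"
      proof -
        have "a^2 - b^2 = (a - b)*(a + b)" by (simp add: power2_eq_square algebra_simps)
        hence "\<bar>a^2 - b^2\<bar> = \<bar>a - b\<bar> * \<bar>a + b\<bar>" by (simp add: abs_mult)
        thus ?thesis using a b by (simp add: abs_minus_commute)
      qed
      finally show ?thesis .
    qed
    have "norm ((b - a) *\<^sub>R z)^2 * L^2 + ((b^2 - a^2) * tau)^2 \<le> L^4"
    proof -
      have "norm ((b - a) *\<^sub>R z)^2 = (b-a)^2 * norm z^2" by (simp add: power_mult_distrib)
      hence "norm ((b - a) *\<^sub>R z)^2 * L^2 \<le> \<bar>a^2 - b^2\<bar> * norm z^2 * L^2"
        using ba by (simp add: mult_right_mono)
      also have "\<dots> = (a^2 - b^2)^2 * norm z^2" using L2 by (simp add: power2_eq_square algebra_simps)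
      finally have f1: "norm ((b - a) *\<^sub>R z)^2 * L^2 \<le> (a^2 - b^2)^2 * norm z^2" .
      have f2: "((b^2 - a^2) * tau)^2 = (a^2 - b^2)^2 * tau^2" by (simp add: power2_eq_square algebra_simps)
      have f3: "(a^2 - b^2)^2 * (norm z^2 + tau^2) = (a^2 - b^2)^2 * norm z^2 + (a^2 - b^2)^2 * tau^2"
        by (simp add: algebra_simps)
      have "norm ((b - a) *\<^sub>R z)^2 * L^2 + ((b^2 - a^2) * tau)^2 \<le> (a^2 - b^2)^2 * (norm z^2 + tau^2)"
        using f1 f2 f3 by linarith
      also have "\<dots> \<le> (a^2 - b^2)^2 * 1" using hP by (intro mult_left_mono) auto
      finally show ?thesis using L4 by simp
    qed
    hence "gN (hmult (hdil b P) (hinv (hdil a P))) \<le> L" unfolding m by (subst gN_crit[OF L]) simp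
    thus ?thesis unfolding L_def .
  qed
qed



lemma near_sphere:
  fixes y p :: "'n::finite heis"
  assumes "gN (hmult y (hinv p)) = r" "gN y < t + 1" "t \<ge> 1"
  shows "\<bar>gN p - r\<bar> \<le> 4*t"
proof -
  have e: "hinv p = hmult (hinv y) (hmult y (hinv p))"
    by (simp add: hmult_assoc[symmetric] hinv_hmult_self)
  have "gN p = gN (hinv p)" by simp
  also have "\<dots> \<le> 2 * gN (hinv y) + gN (hmult y (hinv p))" by (subst e) (rule gN_tri2)
  finally have 1: "gN p \<le> 2 * gN y + r" using assms by simp
  have "r \<le> 2 * gN y + gN (hinv p)" using gN_tri2[of y "hinv p"] assms by simp
  hence 2: "r \<le> 2 * gN y + gN p" by simp
  show ?thesis using 1 2 assms by (simp add: abs_le_iff)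
qed

lemma far_point:
  fixes y q p :: "'n::finite heis"
  assumes "gN (hmult y (hinv p)) = r" "gN (hmult q (hinv y)) < t + 1" "t \<ge> 1"
  shows "r - 4*t \<le> gN (hmult q (hinv p))"
proof -
  have e: "hmult y (hinv p) = hmult (hinv (hmult q (hinv y))) (hmult q (hinv p))"
    by (simp add: hinv_hmult hmult_assoc hmult_assoc[symmetric, of "hinv q" q] hinv_hmult_self)
  have "r \<le> 2 * gN (hinv (hmult q (hinv y))) + gN (hmult q (hinv p))"
    using gN_tri2[of "hinv (hmult q (hinv y))" "hmult q (hinv p)"] assms(1) e by simp
  thus ?thesis using assms by simp
qed

theorem lemma11:
  "\<forall>e::real. 0 < e \<and> e < 1 \<longrightarrow>
    (\<exists>Rbar>0. \<forall>(p::'n::finite heis) q t t' R r r'.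
       p \<noteq> 0 \<longrightarrow> q \<noteq> 0 \<longrightarrow> t \<ge> 1 \<longrightarrow> t' \<ge> 1 \<longrightarrow> R > Rbar \<longrightarrow> R > 1 \<longrightarrow>
       r \<ge> r' \<longrightarrow> r' \<ge> t * t' * R \<longrightarrow> r' \<ge> e * r \<longrightarrow>
       0 \<in> hshell p r t \<inter> hshell q r' t' \<longrightarrow> q \<in> hshell p r t \<longrightarrow>
       hdist (hproj p) (hproj q) \<ge> (1/2) * (1 - sqrt (1 - e^2 / 4)))"
proof (intro allI impI)
  fix e :: real
  assume e: "0 < e \<and> e < 1"
  have "\<forall>(p::'n::finite heis) q t t' R r r'.
       p \<noteq> 0 \<longrightarrow> q \<noteq> 0 \<longrightarrow> t \<ge> 1 \<longrightarrow> t' \<ge> 1 \<longrightarrow> R > 100/e^2 \<longrightarrow> R > 1 \<longrightarrow>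
       r \<ge> r' \<longrightarrow> r' \<ge> t * t' * R \<longrightarrow> r' \<ge> e * r \<longrightarrow>
       0 \<in> hshell p r t \<inter> hshell q r' t' \<longrightarrow> q \<in> hshell p r t \<longrightarrow>
       hdist (hproj p) (hproj q) \<ge> (1/2) * (1 - sqrt (1 - e^2 / 4))"
  proof (intro allI impI)
    fix p q :: "'n heis" and t t' R r r' :: real
    assume p0: "p \<noteq> 0" and q0: "q \<noteq> 0" and t1: "t \<ge> 1" and t'1: "t' \<ge> 1"
      and RR: "R > 100/e^2" and R1: "R > 1" and rr: "r \<ge> r'" and rt: "r' \<ge> t * t' * R"
      and er: "r' \<ge> e * r" and sh0: "0 \<in> hshell p r t \<inter> hshell q r' t'" and shq: "q \<in> hshell p r t"
    have tt: "t * t' \<ge> 1" using t1 t'1 mult_mono[of 1 t 1 t'] by simp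
    have "R \<le> t * t' * R" using tt R1 mult_right_mono[of 1 "t*t'" R] by simp
    hence r'pos: "r' > 0" using rt R1 by linarith
    have rpos: "r > 0" using r'pos rr by simp
    have tR: "t * R \<le> r"
    proof -
      have "t * R \<le> t * t' * R" using t1 t'1 R1 mult_right_mono[of 1 t' "t*R"] by (simp add: algebra_simps)
      thus ?thesis using rt rr by simp
    qed
    have t'R: "t' * R \<le> r'"
    proof -
      have "t' * R \<le> t * t' * R" using t1 t'1 R1 mult_right_mono[of 1 t "t'*R"] by (simp add: algebra_simps)
      thus ?thesis using rt by simp
    qed
    obtain y1 where y1: "hdist y1 p = r" "hdist 0 y1 < t + 1"
      using shell_point[of 0 p r t] sh0 rpos by auto
    obtain y2 where y2: "hdist y2 q = r'" "hdist 0 y2 < t' + 1"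
      using shell_point[of 0 q r' t'] sh0 r'pos by auto
    obtain y3 where y3: "hdist y3 p = r" "hdist q y3 < t + 1"
      using shell_point[of q p r t] shq rpos by auto
    define a where "a = gN p"
    define b where "b = gN q"
    have a0: "a > 0" unfolding a_def using gN_pos[OF p0] .
    have b0: "b > 0" unfolding b_def using gN_pos[OF q0] .
    have ha: "\<bar>a - r\<bar> \<le> 4*t" unfolding a_def
      using near_sphere[of y1 p r t] y1 t1 unfolding hdist_gN by simp
    have hb: "\<bar>b - r'\<bar> \<le> 4*t'" unfolding b_def
      using near_sphere[of y2 q r' t'] y2 t'1 unfolding hdist_gN by simp
    have far: "r - 4*t \<le> gN (hmult q (hinv p))"
      using far_point[of y3 p r q t] y3 t1 unfolding hdist_gN by simp
    define P where "P = hproj p"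
    define Q where "Q = hproj q"
    have P: "P = hdil (1/a) p" unfolding P_def hproj_def a_def hdist_gN by simp
    have Q: "Q = hdil (1/b) q" unfolding Q_def hproj_def b_def hdist_gN by simp
    have pP: "hdil a P = p" unfolding P hdil_hdil using a0 by simp
    have qQ: "hdil b Q = q" unfolding Q hdil_hdil using b0 by simp
    have gP: "gN P \<le> 1" unfolding P using a0 by (simp add: gN_dil a_def)
    define eta where "eta = hdist P Q"
    have eta: "eta = gN (hmult P (hinv Q))" unfolding eta_def hdist_gN ..
    have eta0: "eta \<ge> 0" unfolding eta by (rule gN_nonneg)
    have dec: "hmult q (hinv p) = hmult (hdil b (hmult Q (hinv P))) (hmult (hdil b P) (hinv (hdil a P)))"
      unfolding pP hdil_hmult qQ hdil_hinv
      by (simp add: hmult_assoc hmult_assoc[symmetric, of "hinv (hdil b P)" "hdil b P"] hinv_hmult_self)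
    have "gN (hmult q (hinv p)) \<le> 2 * gN (hdil b (hmult Q (hinv P))) + gN (hmult (hdil b P) (hinv (hdil a P)))"
      unfolding dec by (rule gN_tri2)
    also have "gN (hdil b (hmult Q (hinv P))) = b * eta"
    proof -
      have "hmult Q (hinv P) = hinv (hmult P (hinv Q))" by (simp add: hinv_hmult)
      thus ?thesis using b0 by (simp add: gN_dil eta)
    qed
    also have "gN (hmult (hdil b P) (hinv (hdil a P))) \<le> sqrt \<bar>a^2 - b^2\<bar>"
      by (rule gauge_m[OF gP]) (use a0 b0 in auto)
    finally have main: "r - 4*t \<le> 2*b*eta + sqrt \<bar>a^2 - b^2\<bar>" using far by simp
    have "eta \<ge> (1/2) * (1 - sqrt (1 - e^2/4))"
      by (rule final_arith[of e R t r t' r' a b eta]) (use e RR tR t'R rr er r'pos t1 t'1 ha hb a0 b0 eta0 main in auto)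
    thus "hdist (hproj p) (hproj q) \<ge> (1/2) * (1 - sqrt (1 - e^2 / 4))"
      unfolding eta_def P_def Q_def .
  qed
  moreover have "100/e^2 > 0" using e by simp
  ultimately show "\<exists>Rbar>0. \<forall>(p::'n::finite heis) q t t' R r r'.
       p \<noteq> 0 \<longrightarrow> q \<noteq> 0 \<longrightarrow> t \<ge> 1 \<longrightarrow> t' \<ge> 1 \<longrightarrow> R > Rbar \<longrightarrow> R > 1 \<longrightarrow>
       r \<ge> r' \<longrightarrow> r' \<ge> t * t' * R \<longrightarrow> r' \<ge> e * r \<longrightarrow>
       0 \<in> hshell p r t \<inter> hshell q r' t' \<longrightarrow> q \<in> hshell p r t \<longrightarrow>
       hdist (hproj p) (hproj q) \<ge> (1/2) * (1 - sqrt (1 - e^2 / 4))" by blast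
qed


end
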